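(* Let $v_{max}\in\mathbb{N}$, $V=\{1,\ldots,v_{max}\}$, $b>0$ and $K>0$. Let $f_{mort}:V\to(0,1)$ be any function, and let $f_{mut}:\{-v_{max},\ldots,0,\ldots,v_{max}\}\to[0,1]$ satisfy: $f_{mut}(-u)=f_{mut}(u)$ for all $u$; $u\mapsto f_{mut}(u)$ is decreasing for $u\geq 0$; and $\sum_{u=-v_{max}}^{v_{max}} f_{mut}(u)=1$. Let $P_0:V\to[0,\infty)$ and define $P_n:V\to[0,\infty)$ recursively by $$P_{n+1}(v)=(1-f_{mort}(v))P_n(v)+b\,(P_n\star f_{mut})(v)\left(1-\frac{\|P_n\|_1}{K}\right)\mathbf{1}_{[0,K]}(\|P_n\|_1),\qquad v=1,\ldots,v_{max},$$ where $(P_n\star f_{mut})(v)=\sum_{u=1}^{v_{max}}P_n(u)f_{mut}(v-u)$, $\|P_n\|_1=\sum_{v=1}^{v_{max}}P_n(v)$, and $\mathbf{1}_{[0,K]}$ is the indicator function of $[0,K]$. Define $F_{mut}(u)=\sum_{v=1}^{v_{max}}f_{mut}(v-u)$ for $u=1,\ldots,v_{max}$, and $$B_{up}:=\max\left(\frac{(\|1-f_{mort}\|_\infty+b\|F_{mut}\|_\infty)^2}{4b\|F_{mut}\|_\infty}\cdot K,\ K,\ \|P_0\|_1\right),$$ where $\|\cdot\|_\infty$ denotes the maximum norm (so $\|1-f_{mort}\|_\infty=\max_{v\in V}(1-f_{mort}(v))$ and $\|F_{mut}\|_\infty=\max_u F_{mut}(u)$). Then $\|P_n\|_1\leq B_{up}$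 for all $n\in\mathbb{N}_0$.
   Context: This is a discrete population model (a Verhulst-type model with a trait): $P_n(v)$ is the number of individuals in generation $n$ with trait value $v$, $b$ is the birth rate, $K$ the environmental capacity, $f_{mort}$ the trait-dependent mortality rate and $f_{mut}$ the mutation distribution. *)

theory Defs
  imports "HOL-Analysis.Analysis"
begin

definition l1norm :: "nat \<Rightarrow> (nat \<Rightarrow> real) \<Rightarrow> real" where
  "l1norm vmax P = (\<Sum>v = 1..vmax. P v)"

definition conv_mut :: "nat \<Rightarrow> (nat \<Rightarrow> real) \<Rightarrow> (int \<Rightarrow> real) \<Rightarrow> nat \<Rightarrow> real" where
  "conv_mut vmax P fmut v = (\<Sum>u = 1..vmax. P u * fmut (int v - int u))"

definition indic_0K :: "real \<Rightarrow> real \<Rightarrow> real" where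
  "indic_0K K x = (if 0 \<le> x \<and> x \<le> K then 1 else 0)"

primrec pop :: "nat \<Rightarrow> real \<Rightarrow> real \<Rightarrow> (nat \<Rightarrow> real) \<Rightarrow> (int \<Rightarrow> real)
                 \<Rightarrow> (nat \<Rightarrow> real) \<Rightarrow> nat \<Rightarrow> nat \<Rightarrow> real" where
  "pop vmax b K fmort fmut P0 0 = P0"
| "pop vmax b K fmort fmut P0 (Suc n) =
     (let Pn = pop vmax b K fmort fmut P0 n in
      (\<lambda>v. (1 - fmort v) * Pn v
           + b * conv_mut vmax Pn fmut v * (1 - l1norm vmax Pn / K)
               * indic_0K K (l1norm vmax Pn)))"

definition Fmut :: "nat \<Rightarrow> (int \<Rightarrow> real) \<Rightarrow> nat \<Rightarrow> real" where
  "Fmut vmax fmut u = (\<Sum>v = 1..vmax. fmut (int v - int u))"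

definition Bup :: "nat \<Rightarrow> real \<Rightarrow> real \<Rightarrow> (nat \<Rightarrow> real) \<Rightarrow> (int \<Rightarrow> real) \<Rightarrow> (nat \<Rightarrow> real) \<Rightarrow> real" where
  "Bup vmax b K fmort fmut P0 =
     (let m = Max ((\<lambda>v. 1 - fmort v) ` {1..vmax});
          F = Max (Fmut vmax fmut ` {1..vmax})
      in max ((m + b * F)\<^sup>2 / (4 * b * F) * K) (max K (l1norm vmax P0)))"

end

theory Submission
  imports Defs
begin

theorem theorem2p1:
  fixes vmax :: nat and b K :: real
    and fmort :: "nat \<Rightarrow> real" and fmut :: "int \<Rightarrow> real" and P0 :: "nat \<Rightarrow> real"
  assumes vmax: "vmax \<ge> 1"
    and b: "b > 0" and K: "K > 0"
    and fmort: "\<And>v. v \<in> {1..vmax} \<Longrightarrow> 0 < fmort v \<and> fmort v < 1"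
    and fmut_range: "\<And>u. u \<in> {-int vmax..int vmax} \<Longrightarrow> 0 \<le> fmut u \<and> fmut u \<le> 1"
    and fmut_sym: "\<And>u. u \<in> {-int vmax..int vmax} \<Longrightarrow> fmut (-u) = fmut u"
    and fmut_decr: "\<And>u w. 0 \<le> u \<Longrightarrow> u \<le> w \<Longrightarrow> w \<le> int vmax \<Longrightarrow> fmut w \<le> fmut u"
    and fmut_sum: "(\<Sum>u = -int vmax..int vmax. fmut u) = 1"
    and P0: "\<And>v. v \<in> {1..vmax} \<Longrightarrow> 0 \<le> P0 v"
  shows "\<forall>n. l1norm vmax (pop vmax b K fmort fmut P0 n) \<le> Bup vmax b K fmort fmut P0"
proof -
  define m where "m = Max ((\<lambda>v. 1 - fmort v) ` {1..vmax})"
  define F where "F = Max (Fmut vmax fmut ` {1..vmax})"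
  define B where "B = Bup vmax b K fmort fmut P0"
  have Beq: "B = max ((m + b*F)\<^sup>2 / (4*b*F) * K) (max K (l1norm vmax P0))"
    by (simp add: B_def Bup_def m_def F_def Let_def)
  have ne: "{1..vmax} \<noteq> {}" using vmax by auto
  have mv: "1 - fmort v \<le> m" if "v \<in> {1..vmax}" for v
    unfolding m_def using that by (intro Max_ge) auto
  have m1: "m \<le> 1"
  proof -
    have "m \<in> (\<lambda>v. 1 - fmort v) ` {1..vmax}"
      unfolding m_def using ne by (intro Max_in) auto
    then obtain v where "v \<in> {1..vmax}" "m = 1 - fmort v" by blast
    then show ?thesis using fmort by force
  qed
  have Fu: "Fmut vmax fmut u \<le> F" if "u \<in> {1..vmax}" for u
    unfolding F_def using that by (intro Max_ge) auto
  have f0: "fmut 0 > 0"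
  proof (rule ccontr)
    assume "\<not> fmut 0 > 0"
    then have z0: "fmut 0 = 0" using fmut_range[of 0] by auto
    have "fmut u = 0" if "u \<in> {-int vmax..int vmax}" for u
    proof (cases "u \<ge> 0")
      case True
      then show ?thesis using fmut_decr[of 0 u] fmut_range[of u] that z0 by auto
    next
      case False
      then show ?thesis using fmut_decr[of 0 "-u"] fmut_range[of u] fmut_sym[of u] that z0 by auto
    qed
    then have "(\<Sum>u = -int vmax..int vmax. fmut u) = 0" by simp
    then show False using fmut_sum by simp
  qed
  have Fpos: "F > 0"
  proof -
    have "fmut (int 1 - int 1) \<le> Fmut vmax fmut 1"
      unfolding Fmut_def
      using vmax by (intro member_le_sum) (auto intro!: fmut_range[THEN conjunct1])
    then show ?thesis using Fu[of 1] vmax f0 by auto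
  qed
  have fnn: "0 \<le> fmut (int v - int u)" if "v \<in> {1..vmax}" "u \<in> {1..vmax}" for u v
    using that by (intro fmut_range[THEN conjunct1]) auto
  have main: "(\<forall>v\<in>{1..vmax}. 0 \<le> pop vmax b K fmort fmut P0 n v) \<and>
      l1norm vmax (pop vmax b K fmort fmut P0 n) \<le> B" for n
  proof (induction n)
    case 0
    then show ?case using P0 Beq by auto
  next
    case (Suc n)
    define Q where "Q = pop vmax b K fmort fmut P0 n"
    define S where "S = l1norm vmax Q"
    have Qnn: "\<And>v. v \<in> {1..vmax} \<Longrightarrow> 0 \<le> Q v" and SB: "S \<le> B"
      using Suc by (auto simp: Q_def S_def)
    have Snn: "0 \<le> S" unfolding S_def l1norm_def using Qnn by (intro sum_nonneg) auto
    have next_eq: "pop vmax b K fmort fmut P0 (Suc n) = (\<lambda>v. (1 - fmort v) * Q v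
           + b * conv_mut vmax Q fmut v * (1 - S / K) * indic_0K K S)"
      by (simp add: Q_def S_def Let_def)
    have cnn: "0 \<le> conv_mut vmax Q fmut v" if "v \<in> {1..vmax}" for v
      unfolding conv_mut_def using that Qnn fnn by (intro sum_nonneg) auto
    have cfac: "0 \<le> (1 - S / K) * indic_0K K S"
      using K by (auto simp: indic_0K_def field_simps)
    have nn: "\<forall>v\<in>{1..vmax}. 0 \<le> pop vmax b K fmort fmut P0 (Suc n) v"
    proof
      fix v assume v: "v \<in> {1..vmax}"
      have "0 \<le> (1 - fmort v) * Q v" using fmort[OF v] Qnn[OF v] by auto
      moreover have "0 \<le> b * conv_mut vmax Q fmut v * ((1 - S / K) * indic_0K K S)"
        using b cnn[OF v] cfac by auto
      ultimately show "0 \<le> pop vmax b K fmort fmut P0 (Suc n) v"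
        unfolding next_eq by (simp add: mult.assoc)
    qed
    have swap: "(\<Sum>v = 1..vmax. conv_mut vmax Q fmut v) = (\<Sum>u = 1..vmax. Q u * Fmut vmax fmut u)"
      unfolding conv_mut_def Fmut_def
      by (subst sum.swap) (simp add: sum_distrib_left)
    have S1: "l1norm vmax (pop vmax b K fmort fmut P0 (Suc n)) =
       (\<Sum>v = 1..vmax. (1 - fmort v) * Q v) + b * ((1 - S / K) * indic_0K K S) *
         (\<Sum>u = 1..vmax. Q u * Fmut vmax fmut u)"
      unfolding next_eq l1norm_def swap[symmetric]
      by (simp add: sum.distrib sum_distrib_left mult_ac)
    have A: "(\<Sum>v = 1..vmax. (1 - fmort v) * Q v) \<le> m * S"
      unfolding S_def l1norm_def sum_distrib_left
      by (intro sum_mono mult_right_mono) (auto simp: mv Qnn)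
    have C: "(\<Sum>u = 1..vmax. Q u * Fmut vmax fmut u) \<le> F * S"
      unfolding S_def l1norm_def sum_distrib_left
      proof (intro sum_mono)
        fix u assume u: "u \<in> {1..vmax}"
        show "Q u * Fmut vmax fmut u \<le> F * Q u"
          using mult_left_mono[OF Fu[OF u] Qnn[OF u]] by (simp add: mult.commute)
      qed
    have "l1norm vmax (pop vmax b K fmort fmut P0 (Suc n)) \<le> B"
    proof (cases "S \<le> K")
      case True
      then have ind: "indic_0K K S = 1" using Snn by (simp add: indic_0K_def)
      have c0: "0 \<le> 1 - S / K" using True K by (simp add: field_simps)
      have "l1norm vmax (pop vmax b K fmort fmut P0 (Suc n)) \<le> m * S + b * (1 - S/K) * (F * S)"
        unfolding S1 ind using A mult_left_mono[OF C c0] b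
        by (intro add_mono) (auto simp: mult.assoc intro!: mult_left_mono)
      also have "\<dots> \<le> (m + b*F)\<^sup>2 / (4*b*F) * K"
      proof -
        have "0 \<le> ((m + b*F) * K - 2*b*F*S)\<^sup>2" by simp
        moreover have "4*b*F*(m * S + b * (1 - S/K) * (F * S)) * K
            = (m + b*F)\<^sup>2 * K * K - ((m + b*F) * K - 2*b*F*S)\<^sup>2"
          using K by (simp add: field_simps power2_eq_square)
        ultimately have "4*b*F*(m * S + b * (1 - S/K) * (F * S)) * K \<le> (m + b*F)\<^sup>2 * K * K"
          by linarith
        then have "4*b*F*(m * S + b * (1 - S/K) * (F * S)) \<le> (m + b*F)\<^sup>2 * K"
          using K by (simp add: mult_le_cancel_right)
        then show ?thesis using b Fpos by (simp add: field_simps)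
      qed
      also have "\<dots> \<le> B" unfolding Beq by simp
      finally show ?thesis .
    next
      case False
      then have ind: "indic_0K K S = 0" by (simp add: indic_0K_def)
      have "l1norm vmax (pop vmax b K fmort fmut P0 (Suc n)) \<le> m * S"
        unfolding S1 ind using A by simp
      also have "\<dots> \<le> S" using mult_right_mono[OF m1 Snn] by simp
      finally show ?thesis using SB by simp
    qed
    with nn show ?case by blast
  qed
  then show ?thesis by (simp add: B_def)
qed

end
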